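(* Let the setting of the context hold and suppose $\gamma$ is bounded. Then there exists a constant $b_1>0$ such that \[ P\Big[\max_{1\leq k\leq d_n}|\widehat{\mathcal{E}}_{k} - \mathcal{E}_k|> n^{-\alpha}\Big] \leq O\big( e^{-b_1 \{n^{1-2\alpha}-n^\beta\}}\big)\quad\text{for all } 0<\alpha<(1-\beta)/2. \]
   Context: For each $n$, let $\mathbf{F},\mathbf{G}$ be absolutely continuous distribution functions on $\mathbb{R}^{d_n}$. Training data: $\mathbf{X}_1,\dots,\mathbf{X}_{n_1}$ iid $\mathbf{F}$, $\mathbf{Y}_1,\dots,\mathbf{Y}_{n_2}$ iid $\mathbf{G}$, independent, $n=n_1+n_2$, $\min\{n_1,n_2\}\ge2$, $n_1/n\to\pi_1\in(0,1)$; $\log d_n=O(n^\beta)$ for fixed $0\le\beta<1$. $\gamma:[0,\infty)\to[0,\infty)$ is continuous, increasing, $\gamma(0)=0$, with non-constant completely monotone derivative. $\mathcal{E}_k=2E\gamma(|X_{1k}-Y_{1k}|^2)-E\gamma(|X_{1k}-X_{2k}|^2)-E\gamma(|Y_{1k}-Y_{2k}|^2)$ and $\widehat{\mathcal{E}}_k=\frac{2}{n_1n_2}\sum_{m_1,m_2}\gamma(|X_{m_1k}-Y_{m_2k}|^2)-\binom{n_1}{2}^{-1}\sum_{m_1<m_2}\gamma(|X_{m_1k}-X_{m_2k}|^2)-\binom{n_2}{2}^{-1}\sum_{m_1<m_2}\gamma(|Y_{m_1k}-Y_{m_2k}|^2)$. *)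

theory Defs
  imports "HOL-Probability.Probability" "HOL-Library.Landau_Symbols"
begin

definition completely_monotone_on_pos :: "(real \<Rightarrow> real) \<Rightarrow> bool" where
  "completely_monotone_on_pos f \<longleftrightarrow>
     (\<exists>D :: nat \<Rightarrow> real \<Rightarrow> real.
        (\<forall>x>0. D 0 x = f x) \<and>
        (\<forall>k. \<forall>x>0. (D k has_real_derivative D (Suc k) x) (at x)) \<and>
        (\<forall>k. \<forall>x>0. (-1) ^ k * D k x \<ge> 0))"

definition Ecal :: "'a measure \<Rightarrow> (real \<Rightarrow> real) \<Rightarrow> (nat \<Rightarrow> 'a \<Rightarrow> nat \<Rightarrow> real)
    \<Rightarrow> (nat \<Rightarrow> 'a \<Rightarrow> nat \<Rightarrow> real) \<Rightarrow> nat \<Rightarrow> real" where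
  "Ecal M \<gamma> X Y k =
     2 * (\<integral>\<omega>. \<gamma> (\<bar>X 0 \<omega> k - Y 0 \<omega> k\<bar>\<^sup>2) \<partial>M)
     - (\<integral>\<omega>. \<gamma> (\<bar>X 0 \<omega> k - X 1 \<omega> k\<bar>\<^sup>2) \<partial>M)
     - (\<integral>\<omega>. \<gamma> (\<bar>Y 0 \<omega> k - Y 1 \<omega> k\<bar>\<^sup>2) \<partial>M)"

definition Ehat :: "(real \<Rightarrow> real) \<Rightarrow> nat \<Rightarrow> nat \<Rightarrow> (nat \<Rightarrow> 'a \<Rightarrow> nat \<Rightarrow> real)
    \<Rightarrow> (nat \<Rightarrow> 'a \<Rightarrow> nat \<Rightarrow> real) \<Rightarrow> nat \<Rightarrow> 'a \<Rightarrow> real" where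
  "Ehat \<gamma> n1 n2 X Y k \<omega> =
     2 / (real n1 * real n2) *
       (\<Sum>m1<n1. \<Sum>m2<n2. \<gamma> (\<bar>X m1 \<omega> k - Y m2 \<omega> k\<bar>\<^sup>2))
     - (\<Sum>m2<n1. \<Sum>m1<m2. \<gamma> (\<bar>X m1 \<omega> k - X m2 \<omega> k\<bar>\<^sup>2)) / real (n1 choose 2)
     - (\<Sum>m2<n2. \<Sum>m1<m2. \<gamma> (\<bar>Y m1 \<omega> k - Y m2 \<omega> k\<bar>\<^sup>2)) / real (n2 choose 2)"

end

theory Submission
  imports Defs
begin

lemma (in prob_space) class_hoeffding:
  fixes Z :: "'i \<Rightarrow> 'a \<Rightarrow> real" and E :: "'e set" and a b :: "'e \<Rightarrow> 'i"
    and cls :: "'e \<Rightarrow> 'r" and h :: "real \<times> real \<Rightarrow> real"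
  assumes indep: "indep_vars (\<lambda>_. borel) Z I"
    and finE: "finite E"
    and ab: "\<And>e. e \<in> E \<Longrightarrow> a e \<in> I \<and> b e \<in> I"
    and disj: "\<And>e e'. e \<in> E \<Longrightarrow> e' \<in> E \<Longrightarrow> e \<noteq> e' \<Longrightarrow> cls e = cls e' \<Longrightarrow> {a e, b e} \<inter> {a e', b e'} = {}"
    and hmeas: "h \<in> borel_measurable borel"
    and hb: "\<And>x. 0 \<le> h x \<and> h x \<le> B" and B: "B > 0"
    and theta: "\<And>e. e \<in> E \<Longrightarrow> expectation (\<lambda>\<omega>. h (Z (a e) \<omega>, Z (b e) \<omega>)) = \<theta>"
    and msize: "\<And>e. e \<in> E \<Longrightarrow> m \<le> real (card {e'\<in>E. cls e' = cls e})"
    and t: "t \<ge> 0"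
  shows "prob {\<omega>\<in>space M. t * real (card E) < \<bar>(\<Sum>e\<in>E. h (Z (a e) \<omega>, Z (b e) \<omega>)) - real (card E) * \<theta>\<bar>}
     \<le> real (card (cls ` E)) * (2 * exp (-2 * t\<^sup>2 * m / B\<^sup>2))"
proof -
  define W where "W = (\<lambda>e \<omega>. h (Z (a e) \<omega>, Z (b e) \<omega>))"
  define C where "C r = {e\<in>E. cls e = r}" for r
  have Zm: "i \<in> I \<Longrightarrow> Z i \<in> borel_measurable M" for i
    using indep unfolding indep_vars_def by blast
  have Wm: "W e \<in> borel_measurable M" if "e \<in> E" for e
    unfolding W_def by (rule measurable_compose[OF measurable_Pair hmeas[folded borel_prod]]) (use ab[OF that] Zm in auto)
  have finC: "finite (C r)" for r using finE unfolding C_def by auto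
  let ?A = "\<lambda>r. {\<omega>\<in>space M. t * real (card (C r)) \<le> \<bar>(\<Sum>e\<in>C r. W e \<omega>) - real (card (C r)) * \<theta>\<bar>}"
  have sub: "{\<omega>\<in>space M. t * real (card E) < \<bar>(\<Sum>e\<in>E. W e \<omega>) - real (card E) * \<theta>\<bar>} \<subseteq> (\<Union>r\<in>cls ` E. ?A r)"
  proof
    fix \<omega> assume \<omega>: "\<omega> \<in> {\<omega>\<in>space M. t * real (card E) < \<bar>(\<Sum>e\<in>E. W e \<omega>) - real (card E) * \<theta>\<bar>}"
    show "\<omega> \<in> (\<Union>r\<in>cls ` E. ?A r)"
    proof (rule ccontr)
      assume "\<omega> \<notin> (\<Union>r\<in>cls ` E. ?A r)"
      with \<omega> have lt: "r \<in> cls ` E \<Longrightarrow> \<bar>(\<Sum>e\<in>C r. W e \<omega>) - real (card (C r)) * \<theta>\<bar> < t * real (card (C r))" for r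
        by auto
      have eq1: "(\<Sum>e\<in>E. W e \<omega>) - real (card E) * \<theta> = (\<Sum>e\<in>E. W e \<omega> - \<theta>)"
        by (simp add: sum_subtractf)
      also have "\<dots> = (\<Sum>r\<in>cls ` E. \<Sum>e\<in>C r. W e \<omega> - \<theta>)"
        unfolding C_def by (rule sum.group[symmetric]) (use finE in auto)
      finally have "\<bar>(\<Sum>e\<in>E. W e \<omega>) - real (card E) * \<theta>\<bar> \<le> (\<Sum>r\<in>cls ` E. \<bar>\<Sum>e\<in>C r. W e \<omega> - \<theta>\<bar>)"
        by (simp add: sum_abs)
      also have "\<dots> \<le> (\<Sum>r\<in>cls ` E. t * real (card (C r)))"
        by (intro sum_mono) (use lt in \<open>fastforce simp: sum_subtractf intro: less_imp_le\<close>)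
      also have "\<dots> = t * real (card E)"
      proof -
        have "(\<Sum>r\<in>cls ` E. real (card (C r))) = (\<Sum>r\<in>cls ` E. \<Sum>e\<in>C r. (1::real))" by simp
        also have "\<dots> = (\<Sum>e\<in>E. (1::real))"
          unfolding C_def by (rule sum.group) (use finE in auto)
        finally show ?thesis by (simp add: sum_distrib_left[symmetric])
      qed
      finally show False using \<omega> by auto
    qed
  qed
  have Ameas: "?A r \<in> events" if "r \<in> cls ` E" for r
  proof -
    have "(\<lambda>\<omega>. (\<Sum>e\<in>C r. W e \<omega>)) \<in> borel_measurable M"
      by (intro borel_measurable_sum) (use Wm in \<open>auto simp: C_def\<close>)
    then show ?thesis by measurable
  qed
  have bound: "prob (?A r) \<le> 2 * exp (-2 * t\<^sup>2 * m / B\<^sup>2)" if r: "r \<in> cls ` E" for r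
  proof -
    have Cne: "C r \<noteq> {}" using r unfolding C_def by auto
    have indR: "indep_vars (\<lambda>e. PiM {a e, b e} (\<lambda>_. borel)) (\<lambda>e \<omega>. restrict (\<lambda>i. Z i \<omega>) {a e, b e}) (C r)"
      by (rule indep_vars_restrict[OF indep]) (use ab disj in \<open>auto simp: C_def disjoint_family_on_def\<close>)
    have "indep_vars (\<lambda>_. borel) (\<lambda>e \<omega>. (\<lambda>v. h (v (a e), v (b e))) (restrict (\<lambda>i. Z i \<omega>) {a e, b e})) (C r)"
      by (rule indep_vars_compose2[OF indR]) (use hmeas in measurable)
    then have indW: "indep_vars (\<lambda>_. borel) W (C r)"
      by (rule indep_vars_cong[THEN iffD1, rotated -1]) (auto simp: W_def)
    interpret H: Hoeffding_ineq M "C r" W "\<lambda>_. 0" "\<lambda>_. B" "real (card (C r)) * \<theta>"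
    proof unfold_locales
      show "finite (C r)" by (rule finC)
      show "indep_vars (\<lambda>_. borel) W (C r)" by (rule indW)
      show "AE x in M. W i x \<in> {0..B}" if "i \<in> C r" for i using hb by (auto simp: W_def)
      have "(\<Sum>i\<in>C r. expectation (W i)) = (\<Sum>i\<in>C r. \<theta>)"
        by (rule sum.cong) (use theta in \<open>auto simp: W_def C_def\<close>)
      then show "real (card (C r)) * \<theta> \<equiv> (\<Sum>i\<in>C r. expectation (W i))" by simp
    qed
    have cpos: "card (C r) > 0" using Cne finC by (simp add: card_gt_0_iff)
    have "prob (?A r) \<le> 2 * exp (-2 * (t * real (card (C r)))\<^sup>2 / (\<Sum>i\<in>C r. (B - 0)\<^sup>2))"
      by (rule H.Hoeffding_ineq_abs_ge) (use t B cpos in auto)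
    also have "-2 * (t * real (card (C r)))\<^sup>2 / (\<Sum>i\<in>C r. (B - 0)\<^sup>2) = -2 * t\<^sup>2 * real (card (C r)) / B\<^sup>2"
      using cpos B by (simp add: power2_eq_square field_simps)
    also have "\<dots> \<le> -2 * t\<^sup>2 * m / B\<^sup>2"
    proof -
      obtain e where e: "e \<in> E" "cls e = r" using r by auto
      have "m \<le> real (card (C r))" using msize[OF e(1)] e by (simp add: C_def)
      then show ?thesis using B by (intro divide_right_mono) (auto intro: mult_left_mono)
    qed
    finally show ?thesis by simp
  qed
  have "prob {\<omega>\<in>space M. t * real (card E) < \<bar>(\<Sum>e\<in>E. W e \<omega>) - real (card E) * \<theta>\<bar>} \<le> prob (\<Union>r\<in>cls ` E. ?A r)"
    by (rule finite_measure_mono[OF sub]) (use Ameas finE in auto)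
  also have "\<dots> \<le> (\<Sum>r\<in>cls ` E. prob (?A r))"
    by (rule finite_measure_subadditive_finite) (use Ameas finE in auto)
  also have "\<dots> \<le> (\<Sum>r\<in>cls ` E. 2 * exp (-2 * t\<^sup>2 * m / B\<^sup>2))"
    by (rule sum_mono) (rule bound)
  finally show ?thesis by (simp add: W_def)
qed


lemma dvd_small_int: "(c::int) dvd x \<Longrightarrow> \<bar>x\<bar> < c \<Longrightarrow> x = 0"
  using dvd_imp_le_int[of x c] by (cases "x = 0") auto

lemma mod_eq_small_nat:
  fixes i j :: nat and q :: nat and u :: int
  assumes "(int i + u) mod int q = (int j + u) mod int q" "i < q" "j < q"
  shows "i = j"
proof -
  have "int q dvd (int i + u) - (int j + u)" using assms(1) by (simp add: mod_eq_dvd_iff)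
  then have "int q dvd int i - int j" by simp
  moreover have "\<bar>int i - int j\<bar> < int q" using assms by auto
  ultimately have "int i - int j = 0" by (rule dvd_small_int)
  then show ?thesis by simp
qed

definition cls2 :: "nat \<Rightarrow> nat \<Rightarrow> nat \<times> nat \<Rightarrow> int" where
  "cls2 p q e = (if p \<le> q then (int (snd e) - int (fst e)) mod int q else (int (fst e) - int (snd e)) mod int p)"

lemma cls2_disj:
  assumes "e \<in> {..<p} \<times> {..<q}" "e' \<in> {..<p} \<times> {..<q}" "e \<noteq> e'" "cls2 p q e = cls2 p q e'"
  shows "fst e \<noteq> fst e' \<and> snd e \<noteq> snd e'"
proof (cases "p \<le> q")
  case True
  obtain i j i' j' where e: "e = (i,j)" "e' = (i',j')" by (cases e, cases e')
  have eq: "(int j - int i) mod int q = (int j' - int i') mod int q"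
    using assms(4) True by (simp add: cls2_def e)
  have ij: "i < p" "j < q" "i' < p" "j' < q" using assms(1,2) by (auto simp: e)
  have "i \<noteq> i'"
  proof
    assume "i = i'"
    then have "(int j + (- int i)) mod int q = (int j' + (- int i)) mod int q" using eq by simp
    then have "j = j'" by (rule mod_eq_small_nat) (use ij in auto)
    then show False using \<open>i = i'\<close> assms(3) e by simp
  qed
  moreover have "j \<noteq> j'"
  proof
    assume "j = j'"
    then have "(int i + (- int j)) mod int q = (int i' + (- int j)) mod int q"
      using eq by (metis add.commute minus_diff_eq mod_minus_eq uminus_add_conv_diff)
    then have "i = i'" by (rule mod_eq_small_nat) (use ij True in auto)
    then show False using \<open>j = j'\<close> assms(3) e by simp
  qed
  ultimately show ?thesis by (simp add: e)
next
  case False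
  obtain i j i' j' where e: "e = (i,j)" "e' = (i',j')" by (cases e, cases e')
  have eq: "(int i - int j) mod int p = (int i' - int j') mod int p"
    using assms(4) False by (simp add: cls2_def e)
  have ij: "i < p" "j < q" "i' < p" "j' < q" using assms(1,2) by (auto simp: e)
  have "j \<noteq> j'"
  proof
    assume "j = j'"
    then have "(int i + (- int j)) mod int p = (int i' + (- int j)) mod int p" using eq by simp
    then have "i = i'" by (rule mod_eq_small_nat) (use ij in auto)
    then show False using \<open>j = j'\<close> assms(3) e by simp
  qed
  moreover have "i \<noteq> i'"
  proof
    assume "i = i'"
    then have "(int j + (- int i)) mod int p = (int j' + (- int i)) mod int p"
      using eq by (metis add.commute minus_diff_eq mod_minus_eq uminus_add_conv_diff)
    then have "j = j'" by (rule mod_eq_small_nat) (use ij False in auto)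
    then show False using \<open>i = i'\<close> assms(3) e by simp
  qed
  ultimately show ?thesis by (simp add: e)
qed

lemma cls2_card: "card (cls2 p q ` ({..<p} \<times> {..<q})) \<le> max p q"
proof -
  have "cls2 p q ` ({..<p} \<times> {..<q}) \<subseteq> {0..<int (max p q)}"
  proof
    fix x assume "x \<in> cls2 p q ` ({..<p} \<times> {..<q})"
    then obtain i j where "i < p" "j < q" "x = cls2 p q (i,j)" by auto
    then show "x \<in> {0..<int (max p q)}"
      by (auto simp: cls2_def)
  qed
  then have "card (cls2 p q ` ({..<p} \<times> {..<q})) \<le> card {0..<int (max p q)}"
    by (intro card_mono) auto
  then show ?thesis by simp
qed

lemma cls2_size:
  assumes "e \<in> {..<p} \<times> {..<q}"
  shows "min p q \<le> card {e' \<in> {..<p} \<times> {..<q}. cls2 p q e' = cls2 p q e}"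
proof (cases "p \<le> q")
  case True
  define s where "s = cls2 p q e"
  define f where "f i = (i, nat ((int i + s) mod int q))" for i
  have qpos: "q > 0" using assms by auto
  have "f ` {..<p} \<subseteq> {e' \<in> {..<p} \<times> {..<q}. cls2 p q e' = s}"
  proof
    fix x assume "x \<in> f ` {..<p}"
    then obtain i where i: "i < p" "x = f i" by auto
    have s0: "s mod int q = s" using True by (simp add: s_def cls2_def)
    have "nat ((int i + s) mod int q) < q" using qpos by (simp add: nat_less_iff)
    moreover have "(int (nat ((int i + s) mod int q)) - int i) mod int q = s"
      using qpos s0 by (simp add: mod_diff_left_eq)
    ultimately show "x \<in> {e' \<in> {..<p} \<times> {..<q}. cls2 p q e' = s}"
      using i True by (simp add: f_def cls2_def)
  qed
  then have "card (f ` {..<p}) \<le> card {e' \<in> {..<p} \<times> {..<q}. cls2 p q e' = s}"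
    by (intro card_mono) auto
  moreover have "inj_on f {..<p}" by (auto simp: inj_on_def f_def)
  ultimately have "card {..<p} \<le> card {e' \<in> {..<p} \<times> {..<q}. cls2 p q e' = s}"
    by (simp add: card_image)
  then show ?thesis using True by (simp add: s_def)
next
  case False
  define s where "s = cls2 p q e"
  define f where "f j = (nat ((int j + s) mod int p), j)" for j
  have ppos: "p > 0" using assms by auto
  have "f ` {..<q} \<subseteq> {e' \<in> {..<p} \<times> {..<q}. cls2 p q e' = s}"
  proof
    fix x assume "x \<in> f ` {..<q}"
    then obtain j where j: "j < q" "x = f j" by auto
    have s0: "s mod int p = s" using False by (simp add: s_def cls2_def)
    have "nat ((int j + s) mod int p) < p" using ppos by (simp add: nat_less_iff)
    moreover have "(int (nat ((int j + s) mod int p)) - int j) mod int p = s"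
      using ppos s0 by (simp add: mod_diff_left_eq)
    ultimately show "x \<in> {e' \<in> {..<p} \<times> {..<q}. cls2 p q e' = s}"
      using j False by (simp add: f_def cls2_def)
  qed
  then have "card (f ` {..<q}) \<le> card {e' \<in> {..<p} \<times> {..<q}. cls2 p q e' = s}"
    by (intro card_mono) auto
  moreover have "inj_on f {..<q}" by (auto simp: inj_on_def f_def)
  ultimately have "card {..<q} \<le> card {e' \<in> {..<p} \<times> {..<q}. cls2 p q e' = s}"
    by (simp add: card_image)
  then show ?thesis using False by (simp add: s_def)
qed


lemma mod_eq_small_nat':
  fixes i j u q :: nat
  assumes "(i + u) mod q = (j + u) mod q" "i < q" "j < q"
  shows "i = j"
proof -
  have "int ((i + u) mod q) = int ((j + u) mod q)" using assms(1) by simp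
  then have "(int i + int u) mod int q = (int j + int u) mod int q" by (simp add: of_nat_mod)
  then show ?thesis by (rule mod_eq_small_nat) (use assms in auto)
qed

definition E1 :: "nat \<Rightarrow> (nat \<times> nat) set" where "E1 p = (SIGMA j:{..<p}. {..<j})"
definition cls1 :: "nat \<Rightarrow> nat \<times> nat \<Rightarrow> nat" where "cls1 p e = (fst e + snd e) mod p"

lemma cls1_disj:
  assumes "e \<in> E1 p" "e' \<in> E1 p" "e \<noteq> e'" "cls1 p e = cls1 p e'"
  shows "{fst e, snd e} \<inter> {fst e', snd e'} = {}"
proof -
  obtain j i j' i' where e: "e = (j,i)" "e' = (j',i')" by (cases e, cases e')
  have lt: "i < j" "j < p" "i' < j'" "j' < p" using assms(1,2) by (auto simp: E1_def e)
  have eq: "(j + i) mod p = (j' + i') mod p" using assms(4) by (simp add: cls1_def e)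
  have "j \<noteq> j'"
  proof
    assume h: "j = j'"
    then have "(i + j) mod p = (i' + j) mod p" using eq by (simp add: add.commute)
    then have "i = i'" by (rule mod_eq_small_nat') (use lt h in auto)
    then show False using h assms(3) e by simp
  qed
  moreover have "i \<noteq> i'"
  proof
    assume h: "i = i'"
    then have "(j + i) mod p = (j' + i) mod p" using eq by simp
    then have "j = j'" by (rule mod_eq_small_nat') (use lt h in auto)
    then show False using h assms(3) e by simp
  qed
  moreover have "j \<noteq> i'"
  proof
    assume h: "j = i'"
    then have "(i + j) mod p = (j' + j) mod p" using eq by (simp add: add.commute)
    then have "i = j'" by (rule mod_eq_small_nat') (use lt h in auto)
    then show False using h lt by simp
  qed
  moreover have "i \<noteq> j'"
  proof
    assume h: "i = j'"
    then have "(j + i) mod p = (i' + i) mod p" using eq by (simp add: add.commute)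
    then have "j = i'" by (rule mod_eq_small_nat') (use lt h in auto)
    then show False using h lt by simp
  qed
  ultimately show ?thesis by (auto simp: e)
qed

lemma cls1_card: "card (cls1 p ` E1 p) \<le> p"
proof (cases "p = 0")
  case True then show ?thesis by (simp add: E1_def)
next
  case False
  have "cls1 p ` E1 p \<subseteq> {..<p}" using False by (auto simp: cls1_def)
  then have "card (cls1 p ` E1 p) \<le> card {..<p}" by (intro card_mono) auto
  then show ?thesis by simp
qed

lemma finite_E1: "finite (E1 p)" by (simp add: E1_def)

lemma cls1_size:
  assumes "e \<in> E1 p"
  shows "p \<le> 2 * card {e' \<in> E1 p. cls1 p e' = cls1 p e} + 2"
proof -
  define r where "r = cls1 p e"
  define C where "C = {e' \<in> E1 p. cls1 p e' = r}"
  have ppos: "p > 0" using assms by (auto simp: E1_def)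
  have rp: "r < p" using ppos by (simp add: r_def cls1_def)
  define \<sigma> where "\<sigma> i = (r + p - i) mod p" for i
  define S where "S = {i. i < p \<and> \<sigma> i \<noteq> i}"
  have finC: "finite C" by (simp add: C_def finite_E1)
  have S_sub: "S \<subseteq> fst ` C \<union> snd ` C"
  proof
    fix i assume "i \<in> S"
    then have i: "i < p" "\<sigma> i \<noteq> i" by (auto simp: S_def)
    have sp: "\<sigma> i < p" using ppos by (simp add: \<sigma>_def)
    have cl: "(i + \<sigma> i) mod p = r"
    proof -
      have "(i + \<sigma> i) mod p = (i + (r + p - i)) mod p" by (simp add: \<sigma>_def mod_add_right_eq)
      also have "i + (r + p - i) = r + p" using i by simp
      finally show ?thesis using rp by simp
    qed
    show "i \<in> fst ` C \<union> snd ` C"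
    proof (cases "\<sigma> i < i")
      case True
      have "(i, \<sigma> i) \<in> C" using True i cl by (simp add: C_def E1_def cls1_def)
      then show ?thesis by force
    next
      case False
      then have "i < \<sigma> i" using i by simp
      then have "(\<sigma> i, i) \<in> C" using sp cl by (simp add: C_def E1_def cls1_def add.commute)
      then show ?thesis by force
    qed
  qed
  have "card S \<le> card (fst ` C \<union> snd ` C)" using S_sub finC by (intro card_mono) auto
  also have "\<dots> \<le> card (fst ` C) + card (snd ` C)" by (rule card_Un_le)
  also have "\<dots> \<le> card C + card C" by (intro add_mono card_image_le finC)
  finally have cS: "card S \<le> 2 * card C" by simp
  have bad: "{..<p} - S \<subseteq> {r div 2, (r + p) div 2}"
  proof
    fix i assume "i \<in> {..<p} - S"
    then have i: "i < p" "\<sigma> i = i" by (auto simp: S_def)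
    define x where "x = r + p - i"
    have xlt: "x < 2 * p" using i rp by (simp add: x_def)
    have dec: "x = x div p * p + i" using i(2) div_mult_mod_eq[of x p] by (simp add: \<sigma>_def x_def[symmetric])
    have "x div p < 2" using xlt by (simp add: div_less_iff_less_mult ppos)
    then consider "x div p = 0" | "x div p = 1" by linarith
    then show "i \<in> {r div 2, (r + p) div 2}"
    proof cases
      case 1
      then have "x = i" using dec by simp
      then have "2 * i = r + p" using i by (simp add: x_def)
      then show ?thesis by auto
    next
      case 2
      then have "x = p + i" using dec by simp
      then have "2 * i = r" using i by (simp add: x_def)
      then show ?thesis by auto
    qed
  qed
  have "card ({..<p} - S) \<le> card {r div 2, (r + p) div 2}" using bad by (intro card_mono) auto
  also have "\<dots> \<le> 2" by (simp add: card_insert_le_m1)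
  finally have cb: "card ({..<p} - S) \<le> 2" .
  have U: "S \<union> ({..<p} - S) = {..<p}" by (auto simp: S_def)
  have "p \<le> card S + card ({..<p} - S)" using card_Un_le[of S "{..<p} - S"] U by simp
  then show ?thesis using cS cb by (simp add: C_def r_def)
qed


lemma (in prob_space) indep_var_pair:
  assumes ind: "indep_vars (\<lambda>_. borel) Z I" and ij: "i \<in> I" "j \<in> I" "i \<noteq> j"
  shows "indep_var borel (Z i) borel (Z j)"
proof -
  have "indep_var borel ((\<lambda>f. f i) \<circ> (\<lambda>\<omega>. restrict (\<lambda>i. Z i \<omega>) {i}))
                  borel ((\<lambda>f. f j) \<circ> (\<lambda>\<omega>. restrict (\<lambda>i. Z i \<omega>) {j}))"
    using ij by (intro indep_var_compose[OF indep_var_restrict[OF ind]]) auto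
  also have "((\<lambda>f. f i) \<circ> (\<lambda>\<omega>. restrict (\<lambda>i. Z i \<omega>) {i})) = Z i" by auto
  also have "((\<lambda>f. f j) \<circ> (\<lambda>\<omega>. restrict (\<lambda>i. Z i \<omega>) {j})) = Z j" by auto
  finally show ?thesis .
qed

lemma (in prob_space) pair_exp_eq:
  fixes Z :: "'i \<Rightarrow> 'a \<Rightarrow> real" and h :: "real \<times> real \<Rightarrow> real"
  assumes ind: "indep_vars (\<lambda>_. borel) Z I"
    and ij: "i \<in> I" "j \<in> I" "i \<noteq> j" and ij': "i' \<in> I" "j' \<in> I" "i' \<noteq> j'"
    and di: "distr M borel (Z i) = distr M borel (Z i')"
    and dj: "distr M borel (Z j) = distr M borel (Z j')"
    and hmeas: "h \<in> borel_measurable borel"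
  shows "expectation (\<lambda>\<omega>. h (Z i \<omega>, Z j \<omega>)) = expectation (\<lambda>\<omega>. h (Z i' \<omega>, Z j' \<omega>))"
proof -
  have h2: "(h :: real \<times> real \<Rightarrow> real) \<in> borel_measurable (borel \<Otimes>\<^sub>M borel)"
    using hmeas by (simp add: borel_prod)
  have Zm: "k \<in> I \<Longrightarrow> Z k \<in> borel_measurable M" for k
    using ind unfolding indep_vars_def by blast
  have D: "distr M (borel \<Otimes>\<^sub>M borel) (\<lambda>\<omega>. (Z a \<omega>, Z b \<omega>)) = distr M borel (Z a) \<Otimes>\<^sub>M distr M borel (Z b)"
    if "a \<in> I" "b \<in> I" "a \<noteq> b" for a b
    using indep_var_pair[OF ind that] by (simp add: indep_var_distribution_eq)
  have E: "expectation (\<lambda>\<omega>. h (Z a \<omega>, Z b \<omega>)) = integral\<^sup>L (distr M (borel \<Otimes>\<^sub>M borel) (\<lambda>\<omega>. (Z a \<omega>, Z b \<omega>))) h"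
    if "a \<in> I" "b \<in> I" for a b
    by (rule integral_distr[symmetric]) (use Zm that h2 in auto)
  show ?thesis using E[OF ij(1,2)] E[OF ij'(1,2)] D[OF ij] D[OF ij'] di dj by simp
qed

lemma sum_lessThan_choose2: "(\<Sum>j<p. j) = p choose 2"
  by (induction p) (auto simp: numeral_2_eq_2)

lemma card_E1: "card (E1 p) = p choose 2"
  by (simp add: E1_def card_SigmaI sum_lessThan_choose2)

lemma abs_split3:
  fixes u v w s :: real
  assumes "s < \<bar>2 * u - v - w\<bar>"
  shows "s / 4 < \<bar>u\<bar> \<or> s / 4 < \<bar>v\<bar> \<or> s / 4 < \<bar>w\<bar>"
  using assms by linarith

lemma div_dev:
  fixes S N \<theta> t :: real
  assumes "N > 0"
  shows "t < \<bar>S / N - \<theta>\<bar> \<longleftrightarrow> t * N < \<bar>S - N * \<theta>\<bar>"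
proof -
  have "S / N - \<theta> = (S - N * \<theta>) / N" using assms by (simp add: field_simps)
  then have "\<bar>S / N - \<theta>\<bar> = \<bar>S - N * \<theta>\<bar> / N" using assms by simp
  then show ?thesis using assms by (simp add: pos_less_divide_eq)
qed


lemma half_le: "x \<le> c \<Longrightarrow> 0 \<le> x \<Longrightarrow> (x - 2) / 2 \<le> (c::real)"
  by (simp add: field_simps)

lemma (in prob_space) coord_bound:
  fixes Z :: "nat + nat \<Rightarrow> 'a \<Rightarrow> real" and h :: "real \<times> real \<Rightarrow> real"
  assumes ind: "indep_vars (\<lambda>_. borel) Z (Inl ` {..<p} \<union> Inr ` {..<q})"
    and dX: "\<And>i. i < p \<Longrightarrow> distr M borel (Z (Inl i)) = distr M borel (Z (Inl 0))"
    and dY: "\<And>j. j < q \<Longrightarrow> distr M borel (Z (Inr j)) = distr M borel (Z (Inr 0))"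
    and pq: "2 \<le> p" "2 \<le> q"
    and hmeas: "h \<in> borel_measurable borel"
    and hb: "\<And>x. 0 \<le> h x \<and> h x \<le> B" and B: "B > 0"
    and s: "s \<ge> 0"
  shows "\<exists>A\<in>events. {\<omega>\<in>space M. s < \<bar>2 / (real p * real q) * (\<Sum>m1<p. \<Sum>m2<q. h (Z (Inl m1) \<omega>, Z (Inr m2) \<omega>))
        - (\<Sum>m2<p. \<Sum>m1<m2. h (Z (Inl m1) \<omega>, Z (Inl m2) \<omega>)) / real (p choose 2)
        - (\<Sum>m2<q. \<Sum>m1<m2. h (Z (Inr m1) \<omega>, Z (Inr m2) \<omega>)) / real (q choose 2)
        - (2 * expectation (\<lambda>\<omega>. h (Z (Inl 0) \<omega>, Z (Inr 0) \<omega>))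
           - expectation (\<lambda>\<omega>. h (Z (Inl 0) \<omega>, Z (Inl 1) \<omega>))
           - expectation (\<lambda>\<omega>. h (Z (Inr 0) \<omega>, Z (Inr 1) \<omega>)))\<bar>} \<subseteq> A
     \<and> prob A \<le> 6 * real (p + q) * exp (- (s\<^sup>2 * ((real (min p q) - 2) / 2) / (8 * B\<^sup>2)))"
proof -
  define I where "I = Inl ` {..<p} \<union> Inr ` {..<q}"
  define E2 where "E2 = {..<p} \<times> {..<q}"
  define m where "m = (real (min p q) - 2) / 2"
  define txy where "txy = expectation (\<lambda>\<omega>. h (Z (Inl 0) \<omega>, Z (Inr 0) \<omega>))"
  define txx where "txx = expectation (\<lambda>\<omega>. h (Z (Inl 0) \<omega>, Z (Inl 1) \<omega>))"
  define tyy where "tyy = expectation (\<lambda>\<omega>. h (Z (Inr 0) \<omega>, Z (Inr 1) \<omega>))"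
  define Fxy where "Fxy \<omega> = (\<Sum>e\<in>E2. h (Z (Inl (fst e)) \<omega>, Z (Inr (snd e)) \<omega>))" for \<omega>
  define Fxx where "Fxx \<omega> = (\<Sum>e\<in>E1 p. h (Z (Inl (snd e)) \<omega>, Z (Inl (fst e)) \<omega>))" for \<omega>
  define Fyy where "Fyy \<omega> = (\<Sum>e\<in>E1 q. h (Z (Inr (snd e)) \<omega>, Z (Inr (fst e)) \<omega>))" for \<omega>
  define Axy where "Axy = {\<omega>\<in>space M. s / 4 * real (card E2) < \<bar>Fxy \<omega> - real (card E2) * txy\<bar>}"
  define Axx where "Axx = {\<omega>\<in>space M. s / 4 * real (card (E1 p)) < \<bar>Fxx \<omega> - real (card (E1 p)) * txx\<bar>}"
  define Ayy where "Ayy = {\<omega>\<in>space M. s / 4 * real (card (E1 q)) < \<bar>Fyy \<omega> - real (card (E1 q)) * tyy\<bar>}"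
  have dX2: "distr M borel (Z (Inl i)) = distr M borel (Z (Inl j))" if "i < p" "j < p" for i j
    using dX[OF that(1)] dX[OF that(2)] by simp
  have dY2: "distr M borel (Z (Inr i)) = distr M borel (Z (Inr j))" if "i < q" "j < q" for i j
    using dY[OF that(1)] dY[OF that(2)] by simp
  have ind': "indep_vars (\<lambda>_. borel) Z I" using ind by (simp add: I_def)
  have h2: "h \<in> borel_measurable (borel \<Otimes>\<^sub>M borel)" using hmeas by (simp add: borel_prod)
  have Zm: "k \<in> I \<Longrightarrow> Z k \<in> borel_measurable M" for k
    using ind' unfolding indep_vars_def by blast
  have hZm: "(\<lambda>\<omega>. h (Z a \<omega>, Z b \<omega>)) \<in> borel_measurable M" if "a \<in> I" "b \<in> I" for a b
    by (rule measurable_compose[OF measurable_Pair h2]) (use Zm that in auto)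
  have cE2: "card E2 = p * q" by (simp add: E2_def)
  have cp: "real (p choose 2) > 0" "real (q choose 2) > 0" using pq by (auto simp: zero_less_binomial_iff)
  have Fxy_eq: "(\<Sum>m1<p. \<Sum>m2<q. h (Z (Inl m1) \<omega>, Z (Inr m2) \<omega>)) = Fxy \<omega>" for \<omega>
    by (simp add: Fxy_def E2_def sum.cartesian_product case_prod_beta')
  have Fxx_eq: "(\<Sum>m2<p. \<Sum>m1<m2. h (Z (Inl m1) \<omega>, Z (Inl m2) \<omega>)) = Fxx \<omega>" for \<omega>
    by (simp add: Fxx_def E1_def sum.Sigma case_prod_beta')
  have Fyy_eq: "(\<Sum>m2<q. \<Sum>m1<m2. h (Z (Inr m1) \<omega>, Z (Inr m2) \<omega>)) = Fyy \<omega>" for \<omega>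
    by (simp add: Fyy_def E1_def sum.Sigma case_prod_beta')
  let ?ev = "{\<omega>\<in>space M. s < \<bar>2 / (real p * real q) * (\<Sum>m1<p. \<Sum>m2<q. h (Z (Inl m1) \<omega>, Z (Inr m2) \<omega>))
        - (\<Sum>m2<p. \<Sum>m1<m2. h (Z (Inl m1) \<omega>, Z (Inl m2) \<omega>)) / real (p choose 2)
        - (\<Sum>m2<q. \<Sum>m1<m2. h (Z (Inr m1) \<omega>, Z (Inr m2) \<omega>)) / real (q choose 2)
        - (2 * txy - txx - tyy)\<bar>}"
  have sub: "?ev \<subseteq> Axy \<union> Axx \<union> Ayy"
  proof
    fix \<omega> assume "\<omega> \<in> ?ev"
    then have \<omega>: "\<omega> \<in> space M" and
      lt: "s < \<bar>2 * (Fxy \<omega> / real (card E2) - txy) - (Fxx \<omega> / real (card (E1 p)) - txx) - (Fyy \<omega> / real (card (E1 q)) - tyy)\<bar>"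
      by (auto simp: Fxy_eq Fxx_eq Fyy_eq cE2 card_E1 algebra_simps)
    have pos: "real (card E2) > 0" "real (card (E1 p)) > 0" "real (card (E1 q)) > 0"
      using pq cp by (auto simp: cE2 card_E1)
    from abs_split3[OF lt] show "\<omega> \<in> Axy \<union> Axx \<union> Ayy"
      using \<omega> div_dev[OF pos(1)] div_dev[OF pos(2)] div_dev[OF pos(3)]
      by (auto simp: Axy_def Axx_def Ayy_def)
  qed
  have meas_sum: "(\<lambda>\<omega>. \<Sum>e\<in>E. h (Z (a e) \<omega>, Z (b e) \<omega>)) \<in> borel_measurable M"
    if "\<And>e. e \<in> E \<Longrightarrow> a e \<in> I \<and> b e \<in> I" for E a b
    by (intro borel_measurable_sum hZm) (use that in auto)
  have FxyM: "Fxy \<in> borel_measurable M" unfolding Fxy_def[abs_def]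
    by (rule meas_sum) (auto simp: I_def E2_def)
  have FxxM: "Fxx \<in> borel_measurable M" unfolding Fxx_def[abs_def]
    by (rule meas_sum) (auto simp: I_def E1_def)
  have FyyM: "Fyy \<in> borel_measurable M" unfolding Fyy_def[abs_def]
    by (rule meas_sum) (auto simp: I_def E1_def)
  have Ameas: "Axy \<in> events" "Axx \<in> events" "Ayy \<in> events"
    unfolding Axy_def Axx_def Ayy_def using FxyM FxxM FyyM by measurable
  define bnd where "bnd = 2 * exp (-2 * (s/4)\<^sup>2 * m / B\<^sup>2)"
  have bxy: "prob Axy \<le> real (card (cls2 p q ` E2)) * bnd"
    unfolding Axy_def Fxy_def bnd_def
  proof (rule class_hoeffding[OF ind'])
    show "finite E2" by (simp add: E2_def)
    show "Inl (fst e) \<in> I \<and> Inr (snd e) \<in> I" if "e \<in> E2" for e using that by (auto simp: I_def E2_def)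
    show "{Inl (fst e), Inr (snd e)} \<inter> {Inl (fst e'), Inr (snd e')} = {}"
      if "e \<in> E2" "e' \<in> E2" "e \<noteq> e'" "cls2 p q e = cls2 p q e'" for e e'
      using cls2_disj[of e p q e'] that by (auto simp: E2_def)
    show "h \<in> borel_measurable borel" by (rule hmeas)
    show "0 \<le> h x \<and> h x \<le> B" for x by (rule hb)
    show "B > 0" by (rule B)
    show "expectation (\<lambda>\<omega>. h (Z (Inl (fst e)) \<omega>, Z (Inr (snd e)) \<omega>)) = txy" if "e \<in> E2" for e
      unfolding txy_def
      by (rule pair_exp_eq[OF ind']) (use that pq in \<open>auto simp: I_def E2_def intro: dX2 dY2 hmeas\<close>)
    show "m \<le> real (card {e' \<in> E2. cls2 p q e' = cls2 p q e})" if "e \<in> E2" for e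
    proof -
      have "min p q \<le> card {e' \<in> E2. cls2 p q e' = cls2 p q e}"
        using cls2_size[of e p q] that by (simp add: E2_def)
      then have "real (min p q) \<le> real (card {e' \<in> E2. cls2 p q e' = cls2 p q e})" by (rule of_nat_mono)
      then show ?thesis unfolding m_def by (rule half_le) simp
    qed
    show "0 \<le> s / 4" using s by simp
  qed
  have bxx: "prob Axx \<le> real (card (cls1 p ` E1 p)) * bnd"
    unfolding Axx_def Fxx_def bnd_def
  proof (rule class_hoeffding[OF ind'])
    show "finite (E1 p)" by (rule finite_E1)
    show "Inl (snd e) \<in> I \<and> Inl (fst e) \<in> I" if "e \<in> E1 p" for e using that by (auto simp: I_def E1_def)
    show "{Inl (snd e), Inl (fst e)} \<inter> {Inl (snd e'), Inl (fst e')} = {}"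
      if "e \<in> E1 p" "e' \<in> E1 p" "e \<noteq> e'" "cls1 p e = cls1 p e'" for e e'
      using cls1_disj[OF that] by auto
    show "h \<in> borel_measurable borel" by (rule hmeas)
    show "0 \<le> h x \<and> h x \<le> B" for x by (rule hb)
    show "B > 0" by (rule B)
    show "expectation (\<lambda>\<omega>. h (Z (Inl (snd e)) \<omega>, Z (Inl (fst e)) \<omega>)) = txx" if "e \<in> E1 p" for e
      unfolding txx_def
      by (rule pair_exp_eq[OF ind']) (use that pq in \<open>auto simp: I_def E1_def intro: dX2 dY2 hmeas\<close>)
    show "m \<le> real (card {e' \<in> E1 p. cls1 p e' = cls1 p e})" if "e \<in> E1 p" for e
    proof -
      have "p \<le> 2 * card {e' \<in> E1 p. cls1 p e' = cls1 p e} + 2"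
        using cls1_size[OF that] by simp
      then have "real p \<le> real (2 * card {e' \<in> E1 p. cls1 p e' = cls1 p e} + 2)" by (rule of_nat_mono)
      moreover have "real (min p q) \<le> real p" by simp
      ultimately show ?thesis unfolding m_def by simp
    qed
    show "0 \<le> s / 4" using s by simp
  qed
  have byy: "prob Ayy \<le> real (card (cls1 q ` E1 q)) * bnd"
    unfolding Ayy_def Fyy_def bnd_def
  proof (rule class_hoeffding[OF ind'])
    show "finite (E1 q)" by (rule finite_E1)
    show "Inr (snd e) \<in> I \<and> Inr (fst e) \<in> I" if "e \<in> E1 q" for e using that by (auto simp: I_def E1_def)
    show "{Inr (snd e), Inr (fst e)} \<inter> {Inr (snd e'), Inr (fst e')} = {}"
      if "e \<in> E1 q" "e' \<in> E1 q" "e \<noteq> e'" "cls1 q e = cls1 q e'" for e e'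
      using cls1_disj[OF that] by auto
    show "h \<in> borel_measurable borel" by (rule hmeas)
    show "0 \<le> h x \<and> h x \<le> B" for x by (rule hb)
    show "B > 0" by (rule B)
    show "expectation (\<lambda>\<omega>. h (Z (Inr (snd e)) \<omega>, Z (Inr (fst e)) \<omega>)) = tyy" if "e \<in> E1 q" for e
      unfolding tyy_def
      by (rule pair_exp_eq[OF ind']) (use that pq in \<open>auto simp: I_def E1_def intro: dX2 dY2 hmeas\<close>)
    show "m \<le> real (card {e' \<in> E1 q. cls1 q e' = cls1 q e})" if "e \<in> E1 q" for e
    proof -
      have "q \<le> 2 * card {e' \<in> E1 q. cls1 q e' = cls1 q e} + 2"
        using cls1_size[OF that] by simp
      then have "real q \<le> real (2 * card {e' \<in> E1 q. cls1 q e' = cls1 q e} + 2)" by (rule of_nat_mono)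
      moreover have "real (min p q) \<le> real q" by simp
      ultimately show ?thesis unfolding m_def by simp
    qed
    show "0 \<le> s / 4" using s by simp
  qed
  have bnd0: "bnd \<ge> 0" by (simp add: bnd_def)
  have c1: "real (card (cls2 p q ` E2)) \<le> real (p + q)"
    using cls2_card[of p q] by (simp add: E2_def)
  have c2: "real (card (cls1 p ` E1 p)) \<le> real (p + q)" using cls1_card[of p] by simp
  have c3: "real (card (cls1 q ` E1 q)) \<le> real (p + q)" using cls1_card[of q] by simp
  have "prob (Axy \<union> Axx \<union> Ayy) \<le> prob Axy + prob Axx + prob Ayy"
    using measure_Un_le[of "Axy \<union> Axx" M Ayy] measure_Un_le[of Axy M Axx] Ameas by auto
  also have "\<dots> \<le> real (p + q) * bnd + real (p + q) * bnd + real (p + q) * bnd"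
    using bxy bxx byy c1 c2 c3 bnd0 by (meson add_mono mult_right_mono order_trans)
  also have "\<dots> = 6 * real (p + q) * exp (- (s\<^sup>2 * ((real (min p q) - 2) / 2) / (8 * B\<^sup>2)))"
    by (simp add: bnd_def m_def power2_eq_square field_simps)
  finally have "prob (Axy \<union> Axx \<union> Ayy) \<le> 6 * real (p + q) * exp (- (s\<^sup>2 * ((real (min p q) - 2) / 2) / (8 * B\<^sup>2)))" .
  then show ?thesis using sub Ameas unfolding txy_def txx_def tyy_def
    by (intro bexI[of _ "Axy \<union> Axx \<union> Ayy"]) auto
qed


lemma key_n:
  fixes M' :: "'a measure" and X' Y' :: "nat \<Rightarrow> 'a \<Rightarrow> nat \<Rightarrow> real" and \<gamma> :: "real \<Rightarrow> real"
  assumes P: "prob_space M'"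
    and ind: "prob_space.indep_vars M' (\<lambda>_. PiM {..<D} (\<lambda>_. lborel))
                   (\<lambda>i. case i of Inl m \<Rightarrow> X' m | Inr m \<Rightarrow> Y' m) (Inl ` {..<p} \<union> Inr ` {..<q})"
    and Xm: "\<forall>m<p. X' m \<in> M' \<rightarrow>\<^sub>M PiM {..<D} (\<lambda>_. lborel)"
    and Ym: "\<forall>m<q. Y' m \<in> M' \<rightarrow>\<^sub>M PiM {..<D} (\<lambda>_. lborel)"
    and Xd: "\<forall>m<p. distr M' (PiM {..<D} (\<lambda>_. lborel)) (X' m) = F'"
    and Yd: "\<forall>m<q. distr M' (PiM {..<D} (\<lambda>_. lborel)) (Y' m) = G'"
    and pq: "2 \<le> p" "2 \<le> q" and D: "1 \<le> D"
    and hmeas: "(\<lambda>z::real \<times> real. \<gamma> (\<bar>fst z - snd z\<bar>\<^sup>2)) \<in> borel_measurable borel"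
    and gb: "\<And>t. t \<ge> 0 \<Longrightarrow> 0 \<le> \<gamma> t \<and> \<gamma> t \<le> B" and B: "B > 0"
    and s: "s \<ge> 0"
  shows "measure M' {\<omega> \<in> space M'. s < Max ((\<lambda>k. \<bar>Ehat \<gamma> p q X' Y' k \<omega> - Ecal M' \<gamma> X' Y' k\<bar>) ` {..<D})}
     \<le> real D * (6 * real (p + q) * exp (- (s\<^sup>2 * ((real (min p q) - 2) / 2) / (8 * B\<^sup>2))))"
proof -
  interpret prob_space M' by (rule P)
  define h where "h = (\<lambda>z::real \<times> real. \<gamma> (\<bar>fst z - snd z\<bar>\<^sup>2))"
  define Z where "Z k = (\<lambda>i \<omega>. (case i of Inl m \<Rightarrow> X' m | Inr m \<Rightarrow> Y' m) \<omega> k)" for k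
  define bnd where "bnd = 6 * real (p + q) * exp (- (s\<^sup>2 * ((real (min p q) - 2) / 2) / (8 * B\<^sup>2)))"
  define ev where "ev k = {\<omega> \<in> space M'. s < \<bar>Ehat \<gamma> p q X' Y' k \<omega> - Ecal M' \<gamma> X' Y' k\<bar>}" for k
  have hb: "0 \<le> h x \<and> h x \<le> B" for x unfolding h_def using gb by simp
  have hm: "h \<in> borel_measurable borel" unfolding h_def by (rule hmeas)
  have each: "\<exists>A\<in>events. ev k \<subseteq> A \<and> prob A \<le> bnd" if k: "k < D" for k
  proof -
    have proj: "(\<lambda>v. v k) \<in> borel_measurable (PiM {..<D} (\<lambda>_. lborel))"
      using k by (simp add: measurable_lborel2[symmetric])
    have indZ: "indep_vars (\<lambda>_. borel) (Z k) (Inl ` {..<p} \<union> Inr ` {..<q})"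
      unfolding Z_def using indep_vars_compose2[OF ind, of "\<lambda>_ v. v k" "\<lambda>_. borel"] proj by simp
    have dX: "distr M' borel (Z k (Inl i)) = distr M' borel (Z k (Inl 0))" if "i < p" for i
    proof -
      have "distr M' borel (Z k (Inl j)) = distr F' borel (\<lambda>v. v k)" if "j < p" for j
      proof -
        have "distr M' borel (Z k (Inl j)) = distr M' borel ((\<lambda>v. v k) \<circ> X' j)"
          by (simp add: Z_def o_def)
        also have "\<dots> = distr (distr M' (PiM {..<D} (\<lambda>_. lborel)) (X' j)) borel (\<lambda>v. v k)"
          by (rule distr_distr[symmetric]) (use proj Xm that in auto)
        finally show ?thesis using Xd that by simp
      qed
      then show ?thesis using that pq by simp
    qed
    have dY: "distr M' borel (Z k (Inr i)) = distr M' borel (Z k (Inr 0))" if "i < q" for i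
    proof -
      have "distr M' borel (Z k (Inr j)) = distr G' borel (\<lambda>v. v k)" if "j < q" for j
      proof -
        have "distr M' borel (Z k (Inr j)) = distr M' borel ((\<lambda>v. v k) \<circ> Y' j)"
          by (simp add: Z_def o_def)
        also have "\<dots> = distr (distr M' (PiM {..<D} (\<lambda>_. lborel)) (Y' j)) borel (\<lambda>v. v k)"
          by (rule distr_distr[symmetric]) (use proj Ym that in auto)
        finally show ?thesis using Yd that by simp
      qed
      then show ?thesis using that pq by simp
    qed
    from coord_bound[OF indZ dX dY pq hm hb B s] obtain A where A: "A \<in> events"
      "{\<omega>\<in>space M'. s < \<bar>2 / (real p * real q) * (\<Sum>m1<p. \<Sum>m2<q. h (Z k (Inl m1) \<omega>, Z k (Inr m2) \<omega>))
        - (\<Sum>m2<p. \<Sum>m1<m2. h (Z k (Inl m1) \<omega>, Z k (Inl m2) \<omega>)) / real (p choose 2)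
        - (\<Sum>m2<q. \<Sum>m1<m2. h (Z k (Inr m1) \<omega>, Z k (Inr m2) \<omega>)) / real (q choose 2)
        - (2 * expectation (\<lambda>\<omega>. h (Z k (Inl 0) \<omega>, Z k (Inr 0) \<omega>))
           - expectation (\<lambda>\<omega>. h (Z k (Inl 0) \<omega>, Z k (Inl 1) \<omega>))
           - expectation (\<lambda>\<omega>. h (Z k (Inr 0) \<omega>, Z k (Inr 1) \<omega>)))\<bar>} \<subseteq> A"
      "prob A \<le> bnd"
      unfolding bnd_def by blast
    have "ev k = {\<omega>\<in>space M'. s < \<bar>2 / (real p * real q) * (\<Sum>m1<p. \<Sum>m2<q. h (Z k (Inl m1) \<omega>, Z k (Inr m2) \<omega>))
        - (\<Sum>m2<p. \<Sum>m1<m2. h (Z k (Inl m1) \<omega>, Z k (Inl m2) \<omega>)) / real (p choose 2)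
        - (\<Sum>m2<q. \<Sum>m1<m2. h (Z k (Inr m1) \<omega>, Z k (Inr m2) \<omega>)) / real (q choose 2)
        - (2 * expectation (\<lambda>\<omega>. h (Z k (Inl 0) \<omega>, Z k (Inr 0) \<omega>))
           - expectation (\<lambda>\<omega>. h (Z k (Inl 0) \<omega>, Z k (Inl 1) \<omega>))
           - expectation (\<lambda>\<omega>. h (Z k (Inr 0) \<omega>, Z k (Inr 1) \<omega>)))\<bar>}"
      by (simp add: ev_def Ehat_def Ecal_def h_def Z_def)
    then show ?thesis using A by blast
  qed
  then obtain A where A: "\<And>k. k < D \<Longrightarrow> A k \<in> events \<and> ev k \<subseteq> A k \<and> prob (A k) \<le> bnd"
    by metis
  have sub: "{\<omega> \<in> space M'. s < Max ((\<lambda>k. \<bar>Ehat \<gamma> p q X' Y' k \<omega> - Ecal M' \<gamma> X' Y' k\<bar>) ` {..<D})}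
     \<subseteq> (\<Union>k\<in>{..<D}. A k)"
  proof
    fix \<omega> assume "\<omega> \<in> {\<omega> \<in> space M'. s < Max ((\<lambda>k. \<bar>Ehat \<gamma> p q X' Y' k \<omega> - Ecal M' \<gamma> X' Y' k\<bar>) ` {..<D})}"
    then have \<omega>: "\<omega> \<in> space M'" and "s < Max ((\<lambda>k. \<bar>Ehat \<gamma> p q X' Y' k \<omega> - Ecal M' \<gamma> X' Y' k\<bar>) ` {..<D})" by auto
    then obtain k where "k < D" "s < \<bar>Ehat \<gamma> p q X' Y' k \<omega> - Ecal M' \<gamma> X' Y' k\<bar>"
      using D by (subst (asm) Max_gr_iff) (auto simp: lessThan_empty_iff)
    then have "\<omega> \<in> ev k" "k < D" using \<omega> by (auto simp: ev_def)
    then show "\<omega> \<in> (\<Union>k\<in>{..<D}. A k)" using A by blast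
  qed
  have "measure M' {\<omega> \<in> space M'. s < Max ((\<lambda>k. \<bar>Ehat \<gamma> p q X' Y' k \<omega> - Ecal M' \<gamma> X' Y' k\<bar>) ` {..<D})}
      \<le> prob (\<Union>k\<in>{..<D}. A k)"
    by (rule finite_measure_mono[OF sub]) (use A in auto)
  also have "\<dots> \<le> (\<Sum>k<D. prob (A k))"
    by (rule finite_measure_subadditive_finite) (use A in auto)
  also have "\<dots> \<le> (\<Sum>k<D. bnd)" by (rule sum_mono) (use A in auto)
  finally show ?thesis by (simp add: bnd_def)
qed


lemma asymp_aux:
  fixes g1 \<beta> C c :: real
  assumes "\<beta> < g1" "0 < g1" "0 < C" "0 < c"
  shows "eventually (\<lambda>n::nat. ln (real n) + C * real n powr \<beta> \<le> c / 2 * real n powr g1) at_top"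
proof -
  have o1: "(\<lambda>n::nat. real n powr \<beta>) \<in> o(\<lambda>n. real n powr g1)"
    using powr_smallo_iff[OF filterlim_real_sequentially] assms by simp
  have o2: "(\<lambda>n::nat. real n powr (g1/2)) \<in> o(\<lambda>n. real n powr g1)"
    using powr_smallo_iff[OF filterlim_real_sequentially] assms by simp
  have e1: "eventually (\<lambda>n::nat. norm (real n powr \<beta>) \<le> (c / (4 * C)) * norm (real n powr g1)) at_top"
    by (rule landau_o.smallD[OF o1]) (use assms in simp)
  have e2: "eventually (\<lambda>n::nat. norm (real n powr (g1/2)) \<le> (c * g1 / 8) * norm (real n powr g1)) at_top"
    by (rule landau_o.smallD[OF o2]) (use assms in simp)
  have e3: "eventually (\<lambda>n::nat. n \<ge> 1) at_top" by (rule eventually_ge_at_top)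
  show ?thesis using e1 e2 e3
  proof eventually_elim
    case (elim n)
    have npos: "real n > 0" using elim(3) by simp
    have a1: "C * real n powr \<beta> \<le> c / 4 * real n powr g1"
    proof -
      have "C * real n powr \<beta> \<le> C * ((c / (4 * C)) * real n powr g1)"
        using elim(1) assms by (intro mult_left_mono) auto
      also have "\<dots> = c / 4 * real n powr g1" using assms by (simp add: field_simps)
      finally show ?thesis .
    qed
    have "g1 / 2 * ln (real n) = ln (real n powr (g1/2))" by simp
    also have "\<dots> \<le> real n powr (g1/2) - 1" by (rule ln_le_minus_one) (use npos in simp)
    also have "\<dots> \<le> (c * g1 / 8) * real n powr g1" using elim(2) by simp
    finally have "g1 / 2 * ln (real n) \<le> (c * g1 / 8) * real n powr g1" .
    then have a2: "ln (real n) \<le> c / 4 * real n powr g1"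
      using assms by (simp add: field_simps)
    show ?case using a1 a2 by simp
  qed
qed

theorem lemma5:
  fixes M :: "nat \<Rightarrow> 'a measure"
    and X Y :: "nat \<Rightarrow> nat \<Rightarrow> 'a \<Rightarrow> nat \<Rightarrow> real"
    and F G :: "nat \<Rightarrow> (nat \<Rightarrow> real) measure"
    and d n1 n2 :: "nat \<Rightarrow> nat"
    and \<gamma> :: "real \<Rightarrow> real"
    and \<pi>1 \<beta> :: real
  assumes sizes: "\<forall>n\<ge>4. n1 n + n2 n = n \<and> 2 \<le> n1 n \<and> 2 \<le> n2 n"
    and ratio: "(\<lambda>n. real (n1 n) / real n) \<longlonglongrightarrow> \<pi>1" and pi1: "0 < \<pi>1" "\<pi>1 < 1"
    and beta: "0 \<le> \<beta>" "\<beta> < 1"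
    and dim_pos: "\<forall>n. 1 \<le> d n"
    and dim_growth: "(\<lambda>n. ln (real (d n))) \<in> O(\<lambda>n. real n powr \<beta>)"
    and prob: "\<forall>n\<ge>4. prob_space (M n)"
    and F_ac: "\<forall>n\<ge>4. prob_space (F n) \<and> sets (F n) = sets (PiM {..<d n} (\<lambda>_. lborel))
                 \<and> absolutely_continuous (PiM {..<d n} (\<lambda>_. lborel)) (F n)"
    and G_ac: "\<forall>n\<ge>4. prob_space (G n) \<and> sets (G n) = sets (PiM {..<d n} (\<lambda>_. lborel))
                 \<and> absolutely_continuous (PiM {..<d n} (\<lambda>_. lborel)) (G n)"
    and X_meas: "\<forall>n\<ge>4. \<forall>m<n1 n. X n m \<in> M n \<rightarrow>\<^sub>M PiM {..<d n} (\<lambda>_. lborel)"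
    and Y_meas: "\<forall>n\<ge>4. \<forall>m<n2 n. Y n m \<in> M n \<rightarrow>\<^sub>M PiM {..<d n} (\<lambda>_. lborel)"
    and X_distr: "\<forall>n\<ge>4. \<forall>m<n1 n. distr (M n) (PiM {..<d n} (\<lambda>_. lborel)) (X n m) = F n"
    and Y_distr: "\<forall>n\<ge>4. \<forall>m<n2 n. distr (M n) (PiM {..<d n} (\<lambda>_. lborel)) (Y n m) = G n"
    and indep: "\<forall>n\<ge>4. prob_space.indep_vars (M n) (\<lambda>_. PiM {..<d n} (\<lambda>_. lborel))
                   (\<lambda>i. case i of Inl m \<Rightarrow> X n m | Inr m \<Rightarrow> Y n m)
                   (Inl ` {..<n1 n} \<union> Inr ` {..<n2 n})"
    and \<gamma>_cont: "continuous_on {0..} \<gamma>"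
    and \<gamma>_mono: "mono_on {0..} \<gamma>"
    and \<gamma>_nonneg: "\<forall>t\<ge>0. 0 \<le> \<gamma> t"
    and \<gamma>0: "\<gamma> 0 = 0"
    and \<gamma>_deriv: "\<exists>g. (\<forall>t>0. (\<gamma> has_real_derivative g t) (at t))
                    \<and> completely_monotone_on_pos g
                    \<and> \<not> (\<exists>c. \<forall>t>0. g t = c)"
    and \<gamma>_bounded: "bounded (\<gamma> ` {0..})"
  shows "\<exists>b1>0. \<forall>\<alpha>. 0 < \<alpha> \<and> \<alpha> < (1 - \<beta>) / 2 \<longrightarrow>
           (\<lambda>n. measure (M n) {\<omega> \<in> space (M n).
               Max ((\<lambda>k. \<bar>Ehat \<gamma> (n1 n) (n2 n) (X n) (Y n) k \<omega>
                          - Ecal (M n) \<gamma> (X n) (Y n) k\<bar>) ` {..<d n}) > real n powr (-\<alpha>)})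
           \<in> O(\<lambda>n. exp (- b1 * (real n powr (1 - 2 * \<alpha>) - real n powr \<beta>)))"
proof -
  from \<gamma>_bounded obtain a where a: "\<forall>x\<in>\<gamma> ` {0..}. norm x \<le> a" by (auto simp: bounded_iff)
  define B where "B = \<bar>a\<bar> + 1"
  have B: "B > 0" by (simp add: B_def add_nonneg_pos)
  have gb: "0 \<le> \<gamma> t \<and> \<gamma> t \<le> B" if "t \<ge> 0" for t
  proof -
    have "norm (\<gamma> t) \<le> a" using a that by auto
    then show ?thesis using \<gamma>_nonneg that by (auto simp: B_def)
  qed
  have hmeas: "(\<lambda>z::real \<times> real. \<gamma> (\<bar>fst z - snd z\<bar>\<^sup>2)) \<in> borel_measurable borel"
  proof -
    define g where "g = \<gamma> \<circ> (\<lambda>t::real. max 0 t)"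
    have "continuous_on UNIV g" unfolding g_def
      by (rule continuous_on_compose) (auto intro!: continuous_intros continuous_on_subset[OF \<gamma>_cont])
    have eq: "(\<lambda>z::real \<times> real. \<gamma> (\<bar>fst z - snd z\<bar>\<^sup>2)) = (\<lambda>z. g (\<bar>fst z - snd z\<bar>\<^sup>2))"
      by (simp add: g_def fun_eq_iff)
    have gc: "continuous_on UNIV g" by fact
    have ic: "continuous_on UNIV (\<lambda>z::real \<times> real. \<bar>fst z - snd z\<bar>\<^sup>2)"
      by (intro continuous_intros)
    have "continuous_on UNIV (g \<circ> (\<lambda>z::real \<times> real. \<bar>fst z - snd z\<bar>\<^sup>2))"
      by (rule continuous_on_compose[OF ic continuous_on_subset[OF gc]]) simp
    then show ?thesis unfolding eq by (simp add: o_def borel_measurable_continuous_onI)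
  qed
  define \<mu> where "\<mu> = min \<pi>1 (1 - \<pi>1)"
  have \<mu>: "\<mu> > 0" using pi1 by (simp add: \<mu>_def)
  define c where "c = \<mu> / (64 * B\<^sup>2)"
  have c: "c > 0" using \<mu> B by (simp add: c_def)
  show ?thesis
  proof (intro exI[of _ "c / 2"] conjI allI impI)
    show "c / 2 > 0" using c by simp
    fix \<alpha> :: real assume \<alpha>: "0 < \<alpha> \<and> \<alpha> < (1 - \<beta>) / 2"
    define g1 where "g1 = 1 - 2 * \<alpha>"
    have g1: "\<beta> < g1" "0 < g1" using \<alpha> beta by (auto simp: g1_def)
    obtain C where C: "C > 0" "eventually (\<lambda>n. norm (ln (real (d n))) \<le> C * norm (real n powr \<beta>)) at_top"
      using landau_o.bigE[OF dim_growth] by blast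
    have ev2: "eventually (\<lambda>n. \<pi>1 / 2 < real (n1 n) / real n) at_top"
      by (rule order_tendstoD(1)[OF ratio]) (use pi1 in simp)
    have ev3: "eventually (\<lambda>n. real (n1 n) / real n < (1 + \<pi>1) / 2) at_top"
      by (rule order_tendstoD(2)[OF ratio]) (use pi1 in simp)
    have ev4: "eventually (\<lambda>n. 8 / \<mu> \<le> real n) at_top"
      using filterlim_real_sequentially unfolding filterlim_at_top by blast
    have ev1: "eventually (\<lambda>n::nat. n \<ge> 4) at_top" by (rule eventually_ge_at_top)
    have ev5: "eventually (\<lambda>n::nat. ln (real n) + C * real n powr \<beta> \<le> c / 2 * real n powr g1) at_top"
      by (rule asymp_aux) (use g1 C c in auto)
    have "eventually (\<lambda>n. norm (measure (M n) {\<omega> \<in> space (M n).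
               Max ((\<lambda>k. \<bar>Ehat \<gamma> (n1 n) (n2 n) (X n) (Y n) k \<omega>
                          - Ecal (M n) \<gamma> (X n) (Y n) k\<bar>) ` {..<d n}) > real n powr (-\<alpha>)})
           \<le> 6 * norm (exp (- (c / 2) * (real n powr (1 - 2 * \<alpha>) - real n powr \<beta>)))) at_top"
      using ev1 ev2 ev3 ev4 ev5 C(2)
    proof eventually_elim
      case (elim n)
      define s where "s = real n powr (-\<alpha>)"
      define p where "p = n1 n"
      define q where "q = n2 n"
      have sz: "p + q = n" "2 \<le> p" "2 \<le> q" using sizes elim(1) by (auto simp: p_def q_def)
      have npos: "real n > 0" using elim(1) by simp
      have a1: "prob_space (M n)" using prob elim(1) by simp
      have a2: "prob_space.indep_vars (M n) (\<lambda>_. PiM {..<d n} (\<lambda>_. lborel))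
                   (\<lambda>i. case i of Inl m \<Rightarrow> X n m | Inr m \<Rightarrow> Y n m) (Inl ` {..<p} \<union> Inr ` {..<q})"
        using indep elim(1) by (simp add: p_def q_def)
      have a3: "\<forall>m<p. X n m \<in> M n \<rightarrow>\<^sub>M PiM {..<d n} (\<lambda>_. lborel)" using X_meas elim(1) by (simp add: p_def)
      have a4: "\<forall>m<q. Y n m \<in> M n \<rightarrow>\<^sub>M PiM {..<d n} (\<lambda>_. lborel)" using Y_meas elim(1) by (simp add: q_def)
      have a5: "\<forall>m<p. distr (M n) (PiM {..<d n} (\<lambda>_. lborel)) (X n m) = F n" using X_distr elim(1) by (simp add: p_def)
      have a6: "\<forall>m<q. distr (M n) (PiM {..<d n} (\<lambda>_. lborel)) (Y n m) = G n" using Y_distr elim(1) by (simp add: q_def)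
      have a7: "1 \<le> d n" using dim_pos by simp
      have s0: "s \<ge> 0" by (simp add: s_def)
      have key: "measure (M n) {\<omega> \<in> space (M n). s < Max ((\<lambda>k. \<bar>Ehat \<gamma> p q (X n) (Y n) k \<omega> - Ecal (M n) \<gamma> (X n) (Y n) k\<bar>) ` {..<d n})}
          \<le> real (d n) * (6 * real (p + q) * exp (- (s\<^sup>2 * ((real (min p q) - 2) / 2) / (8 * B\<^sup>2))))"
        by (rule key_n[OF a1 a2 a3 a4 a5 a6 sz(2) sz(3) a7 hmeas gb B s0])
      have pbig: "real p > \<mu> * real n / 2"
      proof -
        have "\<pi>1 / 2 < real p / real n" using elim(2) by (simp add: p_def)
        then have "\<pi>1 / 2 * real n < real p" using npos by (simp add: pos_less_divide_eq)
        moreover have "\<mu> * real n \<le> \<pi>1 * real n" using npos by (intro mult_right_mono) (auto simp: \<mu>_def)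
        ultimately show ?thesis by linarith
      qed
      have qbig: "real q > \<mu> * real n / 2"
      proof -
        have "real p / real n < (1 + \<pi>1) / 2" using elim(3) by (simp add: p_def)
        then have "real p < (1 + \<pi>1) / 2 * real n" using npos by (simp add: pos_divide_less_eq)
        also have "(1 + \<pi>1) / 2 * real n = real n / 2 + \<pi>1 * real n / 2" by (simp add: algebra_simps)
        finally have lt: "real p < real n / 2 + \<pi>1 * real n / 2" .
        have "real p + real q = real n" using sz(1) by (metis of_nat_add)
        moreover have "\<mu> * real n \<le> (1 - \<pi>1) * real n" using npos by (intro mult_right_mono) (auto simp: \<mu>_def)
        moreover have "(1 - \<pi>1) * real n = real n - \<pi>1 * real n" by (simp add: algebra_simps)
        ultimately show ?thesis using lt by linarith
      qed
      have mbig: "(real (min p q) - 2) / 2 \<ge> \<mu> * real n / 8"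
      proof -
        have "real (min p q) > \<mu> * real n / 2" using pbig qbig by (simp add: min_def)
        moreover have "\<mu> * real n \<ge> 8" using elim(4) \<mu> by (simp add: field_simps)
        ultimately show ?thesis by simp
      qed
      have s2: "s\<^sup>2 * real n = real n powr g1"
      proof -
        have "s\<^sup>2 * real n = real n powr (-\<alpha>) * real n powr (-\<alpha>) * real n powr 1"
          using npos by (simp add: s_def power2_eq_square)
        also have "\<dots> = real n powr (-\<alpha> + -\<alpha> + 1)" by (simp only: powr_add)
        also have "-\<alpha> + -\<alpha> + 1 = g1" by (simp add: g1_def)
        finally show ?thesis .
      qed
      have expo: "c * real n powr g1 \<le> s\<^sup>2 * ((real (min p q) - 2) / 2) / (8 * B\<^sup>2)"
      proof -
        have "c * real n powr g1 = s\<^sup>2 * (\<mu> * real n / 8) / (8 * B\<^sup>2)"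
          unfolding s2[symmetric] c_def using B by (simp add: field_simps power2_eq_square)
        also have "\<dots> \<le> s\<^sup>2 * ((real (min p q) - 2) / 2) / (8 * B\<^sup>2)"
          using mbig B by (intro divide_right_mono mult_left_mono) auto
        finally show ?thesis .
      qed
      have dpos: "real (d n) > 0" using dim_pos by (simp add: Suc_le_eq)
      have lnd: "ln (real (d n)) \<le> C * real n powr \<beta>"
        using elim(6) by simp
      have "real (d n) * (6 * real (p + q) * exp (- (s\<^sup>2 * ((real (min p q) - 2) / 2) / (8 * B\<^sup>2))))
          \<le> real (d n) * (6 * real n * exp (- (c * real n powr g1)))"
      proof -
        have "exp (- (s\<^sup>2 * ((real (min p q) - 2) / 2) / (8 * B\<^sup>2))) \<le> exp (- (c * real n powr g1))"
          using expo by simp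
        then have "6 * real (p + q) * exp (- (s\<^sup>2 * ((real (min p q) - 2) / 2) / (8 * B\<^sup>2)))
            \<le> 6 * real n * exp (- (c * real n powr g1))"
          unfolding sz(1) by (intro mult_left_mono) auto
        then show ?thesis using dpos by (intro mult_left_mono) auto
      qed
      also have "\<dots> = 6 * exp (ln (real (d n)) + ln (real n) - c * real n powr g1)"
        using dpos npos by (simp add: exp_add exp_diff exp_minus field_simps)
      also have "\<dots> \<le> 6 * exp (- (c / 2) * real n powr g1)"
        using lnd elim(5) by simp
      also have "\<dots> \<le> 6 * exp (- (c / 2) * (real n powr g1 - real n powr \<beta>))"
        using c by (simp add: algebra_simps mult_nonneg_nonneg)
      finally have fin: "measure (M n) {\<omega> \<in> space (M n). s < Max ((\<lambda>k. \<bar>Ehat \<gamma> p q (X n) (Y n) k \<omega> - Ecal (M n) \<gamma> (X n) (Y n) k\<bar>) ` {..<d n})}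
          \<le> 6 * exp (- (c / 2) * (real n powr g1 - real n powr \<beta>))"
        using key by linarith
      show ?case using fin by (simp add: s_def p_def q_def g1_def)
    qed
    then show "(\<lambda>n. measure (M n) {\<omega> \<in> space (M n).
               Max ((\<lambda>k. \<bar>Ehat \<gamma> (n1 n) (n2 n) (X n) (Y n) k \<omega>
                          - Ecal (M n) \<gamma> (X n) (Y n) k\<bar>) ` {..<d n}) > real n powr (-\<alpha>)})
           \<in> O(\<lambda>n. exp (- (c / 2) * (real n powr (1 - 2 * \<alpha>) - real n powr \<beta>)))"
      by (rule bigoI)
  qed
qed

end
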